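(* On a complex $3$-dimensional torus $T^3$ there is a hermitian metric $\omega$ satisfying \[ \frac{\sqrt{-1}}{2}\,\partial\bar\partial\omega\wedge\omega>0\quad\text{on } T^3 . \]
   Context: A hermitian metric is identified with its positive real $(1,1)$-form $\omega$; a real $(3,3)$-form is $>0$ if it is a positive multiple of $\omega^3$ at every point. *)

theory Defs
  imports "HOL-Analysis.Analysis"
begin

text \<open>A complex 3-torus is C^3 modulo a lattice Lambda = Z v_0 + ... + Z v_5 generated by
  six R-linearly independent vectors.  Objects on the torus are Lambda-periodic
  objects on C^3.\<close>

definition lattice :: "(nat \<Rightarrow> complex^3) \<Rightarrow> (complex^3) set" where
  "lattice v = {(\<Sum>i<6. of_int (n i) *\<^sub>R v i) | n :: nat \<Rightarrow> int. True}"

definition is_lattice_basis :: "(nat \<Rightarrow> complex^3) \<Rightarrow> bool" where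
  "is_lattice_basis v \<longleftrightarrow> inj_on v {..<6} \<and> independent (v ` {..<6})"

definition periodic_wrt :: "(complex^3) set \<Rightarrow> (complex^3 \<Rightarrow> 'b) \<Rightarrow> bool" where
  "periodic_wrt L f \<longleftrightarrow> (\<forall>z. \<forall>l\<in>L. f (z + l) = f z)"

fun iter_dderiv :: "(complex^3 \<Rightarrow> complex) \<Rightarrow> (complex^3) list \<Rightarrow> complex^3 \<Rightarrow> complex" where
  "iter_dderiv f [] = f"
| "iter_dderiv f (v # vs) = iter_dderiv (\<lambda>z. frechet_derivative f (at z) v) vs"

definition smooth_fun :: "(complex^3 \<Rightarrow> complex) \<Rightarrow> bool" where
  "smooth_fun f \<longleftrightarrow> (\<forall>vs z. iter_dderiv f vs differentiable (at z))"

text \<open>Wirtinger derivatives d/dz_a = (d/dx_a - i d/dy_a)/2 and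
  d/dzbar_a = (d/dx_a + i d/dy_a)/2, where z_a = x_a + i y_a.\<close>

definition dz :: "3 \<Rightarrow> (complex^3 \<Rightarrow> complex) \<Rightarrow> complex^3 \<Rightarrow> complex" where
  "dz a f z = (frechet_derivative f (at z) (axis a 1)
               - \<i> * frechet_derivative f (at z) (axis a \<i>)) / 2"

definition dzbar :: "3 \<Rightarrow> (complex^3 \<Rightarrow> complex) \<Rightarrow> complex^3 \<Rightarrow> complex" where
  "dzbar a f z = (frechet_derivative f (at z) (axis a 1)
               + \<i> * frechet_derivative f (at z) (axis a \<i>)) / 2"

text \<open>A hermitian metric on C^3/L, given by its coefficient matrix h, i.e.
  omega = (sqrt(-1)/2) * Sum_{j,k} h j k dz_j wedge dzbar_k,
  with h smooth, L-periodic, hermitian and positive definite at every point.\<close>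

definition hermitian_metric_on_torus ::
  "(complex^3) set \<Rightarrow> (3 \<Rightarrow> 3 \<Rightarrow> complex^3 \<Rightarrow> complex) \<Rightarrow> bool" where
  "hermitian_metric_on_torus L h \<longleftrightarrow>
     (\<forall>j k. smooth_fun (h j k) \<and> periodic_wrt L (h j k)) \<and>
     (\<forall>z j k. h k j z = cnj (h j k z)) \<and>
     (\<forall>z. \<forall>\<xi>::complex^3. \<xi> \<noteq> 0 \<longrightarrow>
          0 < Re (\<Sum>j\<in>UNIV. \<Sum>k\<in>UNIV. h j k z * \<xi> $ j * cnj (\<xi> $ k)))"

text \<open>Sign of the permutation (a,b,c) of (1,2,3), zero if not distinct:
  dz_a wedge dz_b wedge dz_c = eps3 a b c * dz_1 wedge dz_2 wedge dz_3.\<close>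

definition eps3 :: "3 \<Rightarrow> 3 \<Rightarrow> 3 \<Rightarrow> complex" where
  "eps3 a b c = complex_of_real
     (det (vector [axis a (1::real), axis b 1, axis c 1] :: real^3^3))"

text \<open>Coefficients of (3,3)-forms with respect to the basis form
  Phi = dz_1 wedge dzbar_1 wedge dz_2 wedge dzbar_2 wedge dz_3 wedge dzbar_3.
  We use  (dz_a dzbar_b)(dz_j dzbar_k)(dz_p dzbar_q) = eps3 a j p * eps3 b k q * Phi.\<close>

definition omega_cube_coeff :: "(3 \<Rightarrow> 3 \<Rightarrow> complex^3 \<Rightarrow> complex) \<Rightarrow> complex^3 \<Rightarrow> complex" where
  "omega_cube_coeff h z = (\<i>/2)^3 *
     (\<Sum>a\<in>UNIV. \<Sum>b\<in>UNIV. \<Sum>j\<in>UNIV. \<Sum>k\<in>UNIV. \<Sum>p\<in>UNIV. \<Sum>q\<in>UNIV.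
        eps3 a j p * eps3 b k q * h a b z * h j k z * h p q z)"

text \<open>Coefficient of (sqrt(-1)/2) ddbar omega wedge omega, using
  ddbar (f dz_j wedge dzbar_k) = Sum_{a,b} (d/dz_a d/dzbar_b f) dz_a wedge dzbar_b wedge dz_j wedge dzbar_k.\<close>
definition ddbar_omega_wedge_omega_coeff ::
  "(3 \<Rightarrow> 3 \<Rightarrow> complex^3 \<Rightarrow> complex) \<Rightarrow> complex^3 \<Rightarrow> complex" where
  "ddbar_omega_wedge_omega_coeff h z = (\<i>/2) * (\<i>/2) * (\<i>/2) *
     (\<Sum>a\<in>UNIV. \<Sum>b\<in>UNIV. \<Sum>j\<in>UNIV. \<Sum>k\<in>UNIV. \<Sum>p\<in>UNIV. \<Sum>q\<in>UNIV.
        eps3 a j p * eps3 b k q * dz a (dzbar b (h j k)) z * h p q z)"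

definition positive_33_form ::
  "(complex^3 \<Rightarrow> complex) \<Rightarrow> (3 \<Rightarrow> 3 \<Rightarrow> complex^3 \<Rightarrow> complex) \<Rightarrow> bool" where
  "positive_33_form c h \<longleftrightarrow> (\<forall>z. \<exists>r::real. r > 0 \<and> c z = of_real r * omega_cube_coeff h z)"

end

theory Submission imports Defs "HOL-Complex_Analysis.Complex_Analysis" begin


lemma exists_ell:
  fixes v :: "nat \<Rightarrow> complex^3"
  assumes "is_lattice_basis v"
  shows "\<exists>ell::complex^3 \<Rightarrow> real. linear ell \<and> ell (v 0) = 2*pi \<and> (\<forall>l\<in>lattice v. \<exists>n::int. ell l = 2*pi * of_int n)"
proof -
  have inj: "inj_on v {..<6}" and ind: "independent (v ` {..<6})" using assms unfolding is_lattice_basis_def by simp_all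
  obtain ell :: "complex^3 \<Rightarrow> real" where lin: "linear ell" and e: "\<forall>x\<in>v ` {..<6}. ell x = (if x = v 0 then 2*pi else 0)"
    using linear_independent_extend[OF ind, of "\<lambda>x. if x = v 0 then 2*pi else 0"] by blast
  have e0: "ell (v 0) = 2*pi" using bspec[OF e, of "v 0"] by simp
  have ei: "ell (v i) = (if i = 0 then 2*pi else 0)" if "i < 6" for i
  proof -
    have "v i = v 0 \<longleftrightarrow> i = 0" using inj that unfolding inj_on_def by auto
    thus ?thesis using bspec[OF e, of "v i"] that by simp
  qed
  show ?thesis
  proof (rule exI[of _ ell], intro conjI ballI)
    show "linear ell" "ell (v 0) = 2*pi" by fact+
    fix l assume "l \<in> lattice v"
    then obtain n :: "nat \<Rightarrow> int" where l: "l = (\<Sum>i<6. of_int (n i) *\<^sub>R v i)" unfolding lattice_def by auto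
    have "ell l = (\<Sum>i<6. of_int (n i) * ell (v i))" unfolding l
      by (simp add: linear_sum[OF lin] linear_scale[OF lin])
    also have "\<dots> = (\<Sum>i::nat<6. if i = 0 then 2*pi * of_int (n 0) else 0)"
      by (rule sum.cong) (auto simp: ei)
    also have "\<dots> = 2*pi * of_int (n 0)" by simp
    finally show "\<exists>n::int. ell l = 2*pi * of_int n" by blast
  qed
qed

lemma fd:
  fixes ell :: "complex^3 \<Rightarrow> real" and G :: "complex \<Rightarrow> complex"
  assumes lin: "linear ell" and G: "G holomorphic_on UNIV"
  shows "((\<lambda>z. \<kappa> * G (of_real (ell z))) has_derivative (\<lambda>w. \<kappa> * deriv G (of_real (ell z)) * of_real (ell w))) (at z)"
proof -
  have bl: "bounded_linear ell" using lin by (simp add: linear_conv_bounded_linear)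
  have d1: "(ell has_derivative ell) (at z)" using bl by (rule bounded_linear_imp_has_derivative)
  have d2: "((\<lambda>z. of_real (ell z) :: complex) has_derivative (\<lambda>w. of_real (ell w))) (at z)"
    using has_derivative_of_real[OF d1] by simp
  have "(G has_field_derivative deriv G (of_real (ell z))) (at (of_real (ell z)))"
    using G by (meson DERIV_deriv_iff_field_differentiable UNIV_I holomorphic_on_imp_differentiable_at open_UNIV)
  hence d3: "(G has_derivative (\<lambda>x. deriv G (of_real (ell z)) * x)) (at (of_real (ell z)))"
    by (simp add: has_field_derivative_def)
  have "((\<lambda>z. G (of_real (ell z))) has_derivative (\<lambda>w. deriv G (of_real (ell z)) * of_real (ell w))) (at z)"
    using has_derivative_compose[OF d2 d3] by (simp add: o_def)
  from has_derivative_mult_right[OF this, of \<kappa>] show ?thesis by (simp add: algebra_simps)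
qed

lemma fdv:
  fixes ell :: "complex^3 \<Rightarrow> real" and G :: "complex \<Rightarrow> complex"
  assumes lin: "linear ell" and G: "G holomorphic_on UNIV"
  shows "frechet_derivative (\<lambda>z. \<kappa> * G (of_real (ell z))) (at z) w = \<kappa> * deriv G (of_real (ell z)) * of_real (ell w)"
proof -
  have "(\<lambda>w. \<kappa> * deriv G (of_real (ell z)) * of_real (ell w)) = frechet_derivative (\<lambda>z. \<kappa> * G (of_real (ell z))) (at z)"
    by (rule frechet_derivative_at[OF fd[OF lin G]])
  from fun_cong[OF this, of w] show ?thesis by simp
qed

lemma smooth_aux:
  fixes ell :: "complex^3 \<Rightarrow> real"
  assumes lin: "linear ell"
  shows "\<forall>\<kappa> G. G holomorphic_on UNIV \<longrightarrow> iter_dderiv (\<lambda>z. \<kappa> * G (of_real (ell z))) vs differentiable (at z)"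
proof (induction vs)
  case Nil
  show ?case unfolding iter_dderiv.simps using differentiableI[OF fd[OF lin]] by blast
next
  case (Cons v vs)
  show ?case
  proof (intro allI impI)
    fix \<kappa> and G :: "complex \<Rightarrow> complex" assume G: "G holomorphic_on UNIV"
    have eq: "(\<lambda>z. frechet_derivative (\<lambda>z. \<kappa> * G (of_real (ell z))) (at z) v)
       = (\<lambda>z. (\<kappa> * of_real (ell v)) * deriv G (of_real (ell z)))"
      using fdv[OF lin G] by (simp add: algebra_simps)
    have "deriv G holomorphic_on UNIV" using G by (simp add: holomorphic_deriv)
    thus "iter_dderiv (\<lambda>z. \<kappa> * G (of_real (ell z))) (v # vs) differentiable (at z)"
      using Cons.IH[rule_format, of "deriv G" "\<kappa> * of_real (ell v)"] by (simp only: iter_dderiv.simps eq)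
  qed
qed

lemma smooth:
  fixes ell :: "complex^3 \<Rightarrow> real"
  assumes lin: "linear ell" and G: "G holomorphic_on UNIV"
  shows "smooth_fun (\<lambda>z. \<kappa> * G (of_real (ell z)))"
  using smooth_aux[OF lin] G unfolding smooth_fun_def by blast

definition gam :: "(complex^3 \<Rightarrow> real) \<Rightarrow> 3 \<Rightarrow> complex" where
  "gam ell b = of_real (ell (axis b 1)) + \<i> * of_real (ell (axis b \<i>))"

lemma dzbar_form:
  fixes ell :: "complex^3 \<Rightarrow> real"
  assumes lin: "linear ell" and G: "G holomorphic_on UNIV"
  shows "dzbar b (\<lambda>z. \<kappa> * G (of_real (ell z))) = (\<lambda>z. (\<kappa> * gam ell b / 2) * deriv G (of_real (ell z)))"
  unfolding dzbar_def gam_def fdv[OF lin G] by (simp add: algebra_simps)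

lemma dz_form:
  fixes ell :: "complex^3 \<Rightarrow> real"
  assumes lin: "linear ell" and G: "G holomorphic_on UNIV"
  shows "dz a (\<lambda>z. \<kappa> * G (of_real (ell z))) z = (\<kappa> * cnj (gam ell a) / 2) * deriv G (of_real (ell z))"
  unfolding dz_def gam_def fdv[OF lin G] by (simp add: algebra_simps)


lemma eps3_vals: "eps3 1 1 1 = 0"
  "eps3 1 1 2 = 0"
  "eps3 1 1 3 = 0"
  "eps3 1 2 1 = 0"
  "eps3 1 2 2 = 0"
  "eps3 1 2 3 = 1"
  "eps3 1 3 1 = 0"
  "eps3 1 3 2 = -1"
  "eps3 1 3 3 = 0"
  "eps3 2 1 1 = 0"
  "eps3 2 1 2 = 0"
  "eps3 2 1 3 = -1"
  "eps3 2 2 1 = 0"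
  "eps3 2 2 2 = 0"
  "eps3 2 2 3 = 0"
  "eps3 2 3 1 = 1"
  "eps3 2 3 2 = 0"
  "eps3 2 3 3 = 0"
  "eps3 3 1 1 = 0"
  "eps3 3 1 2 = 1"
  "eps3 3 1 3 = 0"
  "eps3 3 2 1 = -1"
  "eps3 3 2 2 = 0"
  "eps3 3 2 3 = 0"
  "eps3 3 3 1 = 0"
  "eps3 3 3 2 = 0"
  "eps3 3 3 3 = 0"
  by (simp_all add: eps3_def det_3 axis_def)

lemma omega_expand:
  fixes h :: "3 \<Rightarrow> 3 \<Rightarrow> complex^3 \<Rightarrow> complex" and H :: "3 \<Rightarrow> real"
  assumes hh: "\<And>j k. h j k z = (if j = k then of_real (H j) else 0)"
  shows "omega_cube_coeff h z = (\<i>/2)^3 * of_real (6 * H 1 * H 2 * H 3)"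
  unfolding omega_cube_coeff_def hh by (simp add: sum_3 eps3_vals)

lemma ddbar_expand:
  fixes h :: "3 \<Rightarrow> 3 \<Rightarrow> complex^3 \<Rightarrow> complex" and H D :: "3 \<Rightarrow> real" and g :: "3 \<Rightarrow> complex"
  assumes hh: "\<And>j k. h j k z = (if j = k then of_real (H j) else 0)"
    and dd: "\<And>a b j k. dz a (dzbar b (h j k)) z = (if j = k then of_real (D j) else 0) * (g b / 2) * (cnj (g a) / 2)"
  shows "ddbar_omega_wedge_omega_coeff h z = (\<i>/2)^3 * of_real (
     (cmod (g 1))^2/4 * (D 2 * H 3 + D 3 * H 2) + (cmod (g 2))^2/4 * (D 1 * H 3 + D 3 * H 1)
     + (cmod (g 3))^2/4 * (D 1 * H 2 + D 2 * H 1))"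
proof -
  let ?C = "g 1 * cnj (g 1) / 4 * (of_real (D 2) * of_real (H 3) + of_real (D 3) * of_real (H 2))
     + g 2 * cnj (g 2) / 4 * (of_real (D 1) * of_real (H 3) + of_real (D 3) * of_real (H 1))
     + g 3 * cnj (g 3) / 4 * (of_real (D 1) * of_real (H 2) + of_real (D 2) * of_real (H 1))"
  have 1: "ddbar_omega_wedge_omega_coeff h z = (\<i>/2)^3 * ?C"
    unfolding ddbar_omega_wedge_omega_coeff_def hh dd by (simp add: sum_3 eps3_vals algebra_simps power3_eq_cube)
  have 2: "of_real (
     (cmod (g 1))^2/4 * (D 2 * H 3 + D 3 * H 2) + (cmod (g 2))^2/4 * (D 1 * H 3 + D 3 * H 1)
     + (cmod (g 3))^2/4 * (D 1 * H 2 + D 2 * H 1)) = ?C"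
    by (simp only: of_real_add of_real_mult of_real_divide complex_norm_square of_real_numeral)
  show ?thesis using 1 2 by simp
qed


definition ur :: "3 \<Rightarrow> real \<Rightarrow> real" where
  "ur j t = (if j = 1 then sin t else if j = 2 then cos t else sin t + cos t)"
definition dur :: "3 \<Rightarrow> real \<Rightarrow> real" where
  "dur j t = (if j = 1 then cos t else if j = 2 then - sin t else cos t - sin t)"
definition ddur :: "3 \<Rightarrow> real \<Rightarrow> real" where
  "ddur j t = (if j = 1 then - sin t else if j = 2 then - cos t else - sin t - cos t)"
definition uc :: "3 \<Rightarrow> complex \<Rightarrow> complex" where
  "uc j t = (if j = 1 then sin t else if j = 2 then cos t else sin t + cos t)"
definition duc :: "3 \<Rightarrow> complex \<Rightarrow> complex" where
  "duc j t = (if j = 1 then cos t else if j = 2 then - sin t else cos t - sin t)"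
definition dduc :: "3 \<Rightarrow> complex \<Rightarrow> complex" where
  "dduc j t = (if j = 1 then - sin t else if j = 2 then - cos t else - sin t - cos t)"

definition Gc :: "3 \<Rightarrow> complex \<Rightarrow> complex" where
  "Gc j w = exp (10 * uc j w)"

lemma uc_deriv: "(uc j has_field_derivative duc j w) (at w)"
  unfolding uc_def duc_def by (auto intro!: derivative_eq_intros)
lemma duc_deriv: "(duc j has_field_derivative dduc j w) (at w)"
  unfolding dduc_def duc_def by (auto intro!: derivative_eq_intros)

lemma uc_real: "uc j (of_real t) = of_real (ur j t)" "duc j (of_real t) = of_real (dur j t)"
  "dduc j (of_real t) = of_real (ddur j t)"
  unfolding uc_def ur_def duc_def dur_def dduc_def ddur_def by (auto simp: sin_of_real cos_of_real)

lemma Gc_deriv1: "(Gc j has_field_derivative (10 * duc j w * exp (10 * uc j w))) (at w)"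
  unfolding Gc_def using uc_deriv[of j w]
  by (auto intro!: derivative_eq_intros simp: algebra_simps)

lemma Gc_holo: "Gc j holomorphic_on UNIV"
  using Gc_deriv1 by (meson UNIV_I field_differentiable_def holomorphic_on_def field_differentiable_at_within)

lemma Gc_d1: "deriv (Gc j) = (\<lambda>w. 10 * duc j w * exp (10 * uc j w))"
  using Gc_deriv1 DERIV_imp_deriv by blast

lemma Gc_deriv2: "((\<lambda>w. 10 * duc j w * exp (10 * uc j w)) has_field_derivative
    ((10 * dduc j w + 100 * (duc j w)^2) * exp (10 * uc j w))) (at w)"
  using uc_deriv[of j w] duc_deriv[of j w]
  by (auto intro!: derivative_eq_intros simp: algebra_simps power2_eq_square)

lemma Gc_d2: "deriv (deriv (Gc j)) = (\<lambda>w. (10 * dduc j w + 100 * (duc j w)^2) * exp (10 * uc j w))"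
  unfolding Gc_d1 using Gc_deriv2 DERIV_imp_deriv by blast

lemma Gc_real: "Gc j (of_real t) = of_real (exp (10 * ur j t))"
  unfolding Gc_def uc_real by (simp add: exp_of_real[symmetric])

lemma Gc_d2_real: "deriv (deriv (Gc j)) (of_real t) = of_real ((10 * ddur j t + 100 * (dur j t)^2) * exp (10 * ur j t))"
  unfolding Gc_d2 uc_real by (simp add: exp_of_real[symmetric])

lemma ur_periodic: "ur j (t + 2 * pi * of_int n) = ur j t"
  unfolding ur_def by (simp add: sin_add cos_add)

lemma pair_pos:
  fixes s c :: real
  assumes "s^2 + c^2 = 1" "\<bar>s\<bar> \<le> 1" "\<bar>c\<bar> \<le> 1"
  shows "10 * (- s - 2 * c) + 100 * (s^2 + (c - s)^2) > 0"
    "10 * (- 2 * s - c) + 100 * (c^2 + (c - s)^2) > 0"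
    "10 * (- s - c) + 100 * (s^2 + c^2) > 0"
proof -
  have q1: "s^2 + (c - s)^2 - (s^2 + c^2)/3 = (5 * (s - 3 * c/5)^2 + c^2/5)/3"
    by (simp add: power2_eq_square algebra_simps)
  have q2: "c^2 + (c - s)^2 - (s^2 + c^2)/3 = (5 * (c - 3 * s/5)^2 + s^2/5)/3"
    by (simp add: power2_eq_square algebra_simps)
  have "0 \<le> s^2 + (c - s)^2 - (s^2 + c^2)/3" unfolding q1 by simp
  hence b1: "s^2 + (c - s)^2 \<ge> 1/3" unfolding assms(1) by simp
  have "0 \<le> c^2 + (c - s)^2 - (s^2 + c^2)/3" unfolding q2 by simp
  hence b2: "c^2 + (c - s)^2 \<ge> 1/3" unfolding assms(1) by simp
  have a: "s + 2 * c \<le> 3" "2 * s + c \<le> 3" "s + c \<le> 2" using assms(2,3) by (simp_all add: abs_le_iff)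
  show "10 * (- s - 2 * c) + 100 * (s^2 + (c - s)^2) > 0" using a b1 by argo
  show "10 * (- 2 * s - c) + 100 * (c^2 + (c - s)^2) > 0" using a b2 by argo
  show "10 * (- s - c) + 100 * (s^2 + c^2) > 0" using a assms(1) by argo
qed


lemma decomp: fixes x :: "complex^3"
  shows "x = (\<Sum>m\<in>UNIV. Re (x$m) *\<^sub>R axis m 1 + Im (x$m) *\<^sub>R axis m \<i>)"
  by (simp add: vec_eq_iff sum_3 axis_def complex_eq_iff) (metis exhaust_3)
lemma re_term: "Re (of_real a * w * cnj w) = a * (cmod w)^2"
  by (simp add: mult.assoc complex_norm_square[symmetric])
lemma vec_ne: fixes x :: "complex^3" assumes "x \<noteq> 0" shows "x$1 \<noteq> 0 \<or> x$2 \<noteq> 0 \<or> x$3 \<noteq> 0"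
  using assms by (simp add: vec_eq_iff forall_3)

definition Hr :: "3 \<Rightarrow> real \<Rightarrow> real" where "Hr j t = exp (10 * ur j t)"
definition Dr :: "3 \<Rightarrow> real \<Rightarrow> real" where
  "Dr j t = (10 * ddur j t + 100 * (dur j t)^2) * exp (10 * ur j t)"

lemma pairs:
  "Dr 2 t * Hr 3 t + Dr 3 t * Hr 2 t > 0"
  "Dr 1 t * Hr 3 t + Dr 3 t * Hr 1 t > 0"
  "Dr 1 t * Hr 2 t + Dr 2 t * Hr 1 t > 0"
proof -
  have sc: "(sin t)^2 + (cos t)^2 = 1" "\<bar>sin t\<bar> \<le> 1" "\<bar>cos t\<bar> \<le> 1" by simp_all
  note pp = pair_pos[OF sc]
  have e1: "Dr 2 t * Hr 3 t + Dr 3 t * Hr 2 t = exp (10 * ur 2 t) * exp (10 * ur 3 t) *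
     (10 * (- sin t - 2 * cos t) + 100 * ((sin t)^2 + (cos t - sin t)^2))"
    unfolding Dr_def Hr_def ur_def dur_def ddur_def by (simp add: algebra_simps power2_eq_square del: sin_cos_squared_add sin_cos_squared_add2 sin_cos_squared_add3)
  have e2: "Dr 1 t * Hr 3 t + Dr 3 t * Hr 1 t = exp (10 * ur 1 t) * exp (10 * ur 3 t) *
     (10 * (- 2 * sin t - cos t) + 100 * ((cos t)^2 + (cos t - sin t)^2))"
    unfolding Dr_def Hr_def ur_def dur_def ddur_def by (simp add: algebra_simps power2_eq_square del: sin_cos_squared_add sin_cos_squared_add2 sin_cos_squared_add3)
  have e3: "Dr 1 t * Hr 2 t + Dr 2 t * Hr 1 t = exp (10 * ur 1 t) * exp (10 * ur 2 t) *
     (10 * (- sin t - cos t) + 100 * ((sin t)^2 + (cos t)^2))"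
    unfolding Dr_def Hr_def ur_def dur_def ddur_def by (simp add: algebra_simps power2_eq_square del: sin_cos_squared_add sin_cos_squared_add2 sin_cos_squared_add3)
  show "Dr 2 t * Hr 3 t + Dr 3 t * Hr 2 t > 0" unfolding e1 using pp(1) by simp
  show "Dr 1 t * Hr 3 t + Dr 3 t * Hr 1 t > 0" unfolding e2 using pp(2) by simp
  show "Dr 1 t * Hr 2 t + Dr 2 t * Hr 1 t > 0" unfolding e3 using pp(3) by simp
qed

lemma gam_nonzero:
  fixes ell :: "complex^3 \<Rightarrow> real"
  assumes lin: "linear ell" and nz: "ell w \<noteq> 0"
  shows "\<exists>m. gam ell m \<noteq> 0"
proof (rule ccontr)
  assume "\<not> (\<exists>m. gam ell m \<noteq> 0)"
  hence g0: "gam ell m = 0" for m by blast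
  have a: "ell (axis m 1) = 0" "ell (axis m \<i>) = 0" for m
    using g0[of m] unfolding gam_def by (simp_all add: complex_eq_iff)
  have "ell w = (\<Sum>m\<in>UNIV. Re (w$m) * ell (axis m 1) + Im (w$m) * ell (axis m \<i>))"
    by (subst decomp[of w]) (simp add: linear_sum[OF lin] linear_add[OF lin] linear_scale[OF lin])
  also have "\<dots> = 0" by (simp add: a)
  finally show False using nz by simp
qed

theorem proposition18:
  fixes v :: "nat \<Rightarrow> complex^3"
  assumes "is_lattice_basis v"
  shows "\<exists>h. hermitian_metric_on_torus (lattice v) h \<and>
             positive_33_form (ddbar_omega_wedge_omega_coeff h) h"
proof -
  obtain ell :: "complex^3 \<Rightarrow> real" where lin: "linear ell" and e0: "ell (v 0) = 2*pi"
    and per: "\<forall>l\<in>lattice v. \<exists>n::int. ell l = 2*pi * of_int n"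
    using exists_ell[OF assms] by blast
  define h :: "3 \<Rightarrow> 3 \<Rightarrow> complex^3 \<Rightarrow> complex" where
    "h = (\<lambda>j k z. (if j = k then 1 else 0) * Gc j (of_real (ell z)))"
  have hz: "h j k z = (if j = k then of_real (Hr j (ell z)) else 0)" for j k z
    unfolding h_def Hr_def Gc_real by simp
  have dd: "dz a (dzbar b (h j k)) z = (if j = k then of_real (Dr j (ell z)) else 0) * (gam ell b / 2) * (cnj (gam ell a) / 2)"
    for a b j k z
  proof -
    define \<kappa> :: complex where "\<kappa> = (if j = k then 1 else 0)"
    have hj: "h j k = (\<lambda>z. \<kappa> * Gc j (of_real (ell z)))" unfolding h_def \<kappa>_def by simp
    have A: "dzbar b (h j k) = (\<lambda>z. (\<kappa> * gam ell b / 2) * deriv (Gc j) (of_real (ell z)))"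
      unfolding hj by (rule dzbar_form[OF lin Gc_holo])
    have "dz a (dzbar b (h j k)) z = ((\<kappa> * gam ell b / 2) * cnj (gam ell a) / 2) * deriv (deriv (Gc j)) (of_real (ell z))"
      unfolding A by (rule dz_form[OF lin holomorphic_deriv[OF Gc_holo open_UNIV]])
    thus ?thesis unfolding Gc_d2_real Dr_def \<kappa>_def by simp
  qed
  have herm: "hermitian_metric_on_torus (lattice v) h"
    unfolding hermitian_metric_on_torus_def
  proof (intro conjI allI impI)
    fix j k
    show "smooth_fun (h j k)" unfolding h_def by (rule smooth[OF lin Gc_holo])
    show "periodic_wrt (lattice v) (h j k)" unfolding periodic_wrt_def
    proof (intro allI ballI)
      fix z l assume "l \<in> lattice v"
      then obtain n :: int where n: "ell l = 2*pi * of_int n" using per by blast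
      have "ell (z + l) = ell z + 2*pi * of_int n" using n linear_add[OF lin] by simp
      thus "h j k (z + l) = h j k z" unfolding hz Hr_def by (simp add: ur_periodic)
    qed
  next
    fix z j k show "h k j z = cnj (h j k z)" unfolding hz by simp
  next
    fix z and \<xi> :: "complex^3" assume "\<xi> \<noteq> 0"
    have "Re (\<Sum>j\<in>UNIV. \<Sum>k\<in>UNIV. h j k z * \<xi> $ j * cnj (\<xi> $ k))
      = Hr 1 (ell z) * (cmod (\<xi>$1))^2 + Hr 2 (ell z) * (cmod (\<xi>$2))^2 + Hr 3 (ell z) * (cmod (\<xi>$3))^2"
      unfolding hz cmod_power2 by (simp add: sum_3 power2_eq_square algebra_simps)
    moreover have "Hr j (ell z) > 0" for j unfolding Hr_def by simp
    moreover have "cmod (\<xi>$1) > 0 \<or> cmod (\<xi>$2) > 0 \<or> cmod (\<xi>$3) > 0" using vec_ne[OF \<open>\<xi> \<noteq> 0\<close>] by auto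
    ultimately show "0 < Re (\<Sum>j\<in>UNIV. \<Sum>k\<in>UNIV. h j k z * \<xi> $ j * cnj (\<xi> $ k))"
      by (smt (verit) mult_pos_pos mult_nonneg_nonneg zero_less_power zero_le_power norm_ge_zero)
  qed
  have pos: "positive_33_form (ddbar_omega_wedge_omega_coeff h) h"
    unfolding positive_33_form_def
  proof
    fix z
    let ?t = "ell z"
    define S where "S = (cmod (gam ell 1))^2/4 * (Dr 2 ?t * Hr 3 ?t + Dr 3 ?t * Hr 2 ?t)
      + (cmod (gam ell 2))^2/4 * (Dr 1 ?t * Hr 3 ?t + Dr 3 ?t * Hr 1 ?t)
      + (cmod (gam ell 3))^2/4 * (Dr 1 ?t * Hr 2 ?t + Dr 2 ?t * Hr 1 ?t)"
    define W where "W = 6 * Hr 1 ?t * Hr 2 ?t * Hr 3 ?t"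
    have c1: "ddbar_omega_wedge_omega_coeff h z = (\<i>/2)^3 * of_real S"
      unfolding S_def by (rule ddbar_expand[OF hz dd])
    have c2: "omega_cube_coeff h z = (\<i>/2)^3 * of_real W"
      unfolding W_def by (rule omega_expand[OF hz])
    have Wp: "W > 0" unfolding W_def Hr_def by simp
    obtain m where m: "gam ell m \<noteq> 0" using gam_nonzero[OF lin, of "v 0"] e0 by auto
    have P: "Dr 2 ?t * Hr 3 ?t + Dr 3 ?t * Hr 2 ?t > 0" "Dr 1 ?t * Hr 3 ?t + Dr 3 ?t * Hr 1 ?t > 0"
      "Dr 1 ?t * Hr 2 ?t + Dr 2 ?t * Hr 1 ?t > 0" by (rule pairs)+
    have T: "(cmod (gam ell a))^2/4 \<ge> 0" for a by simp
    have Tm: "(cmod (gam ell m))^2/4 > 0" using m by simp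
    have "S > 0"
    proof -
      have "m = 1 \<or> m = 2 \<or> m = 3" by (rule exhaust_3)
      thus ?thesis unfolding S_def using P T Tm
        by (smt (verit) mult_pos_pos mult_nonneg_nonneg)
    qed
    show "\<exists>r>0. ddbar_omega_wedge_omega_coeff h z = of_real r * omega_cube_coeff h z"
    proof (intro exI conjI)
      show "S / W > 0" using \<open>S > 0\<close> Wp by simp
      show "ddbar_omega_wedge_omega_coeff h z = of_real (S / W) * omega_cube_coeff h z"
        unfolding c1 c2 using Wp by (simp add: field_simps)
    qed
  qed
  show ?thesis using herm pos by blast
qed

end
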